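(* Let $k\ge1$ and consider the Poisson mixture on $\{0,1,2,\dots\}$ $$f(x\mid\lambda,\boldsymbol\gamma,\mathbf p)=\frac{1}{x!}\sum_{i=1}^k p_i\,\lambda_i^x e^{-\lambda_i},\qquad \lambda_i=\frac{\lambda\gamma_i}{p_i},$$ where $\lambda>0$, $\mathbf p=(p_1,\dots,p_k)$ with $p_i>0$, $\sum_i p_i=1$, and $\boldsymbol\gamma=(\gamma_1,\dots,\gamma_k)$ with $\gamma_i>0$, $\sum_i\gamma_i=1$ (so that $\lambda=\sum_i p_i\lambda_i$ is the mean of the mixture). Put the prior $\lambda^{-1}\,\mathrm d\lambda\times\pi_0(\mathrm d(\boldsymbol\gamma,\mathbf p))$ where $\pi_0$ is any proper probability distribution not depending on $\lambda$. Then for any sample $x_1,\dots,x_n\in\{0,1,2,\dots\}$ containing at least one strictly positive observation, the posterior distribution is proper, i.e. $0<\int\prod_{j=1}^n f(x_j\mid\lambda,\boldsymbol\gamma,\mathbf p)\,\lambda^{-1}\mathrm d\lambda\,\pi_0(\mathrm d(\boldsymbol\gamma,\mathbf p))<\infty$.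
   Context: A posterior is proper when likelihood times prior has finite positive total integral over the parameter space. *)

theory Defs
  imports "HOL-Probability.Probability"
begin

definition pois_mix :: "nat \<Rightarrow> real \<Rightarrow> real^'k::finite \<Rightarrow> real^'k \<Rightarrow> real" where
  "pois_mix x l g p =
     (1 / fact x) * (\<Sum>i\<in>UNIV. p$i * (l * g$i / p$i) ^ x * exp (- (l * g$i / p$i)))"

definition open_simplex :: "(real^'k::finite) set" where
  "open_simplex = {v. (\<forall>i. v$i > 0) \<and> (\<Sum>i\<in>UNIV. v$i) = 1}"

end

theory Submission
  imports Defs
begin
lemma pow_fact_le_exp: fixes y::real assumes "0 \<le> y" shows "y ^ n / fact n \<le> exp y"
proof -
  have s: "(\<lambda>n. y ^ n / fact n) sums exp y"
    using exp_converges[of y] by (simp add: divide_inverse mult.commute)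
  have "y ^ n / fact n = (\<Sum>i\<in>{n}. y ^ i / fact i)" by simp
  also have "\<dots> \<le> (\<Sum>i. y ^ i / fact i)"
    by (rule sum_le_suminf) (use s assms in \<open>auto simp: sums_iff\<close>)
  finally show ?thesis using s by (simp add: sums_iff)
qed

lemma poi_le1: fixes y::real assumes "0 \<le> y" shows "y ^ n / fact n * exp (- y) \<le> 1"
proof -
  have "y ^ n / fact n * exp (- y) \<le> exp y * exp (- y)"
    by (rule mult_right_mono[OF pow_fact_le_exp[OF assms]]) simp
  also have "\<dots> = 1" by (simp add: exp_minus)
  finally show ?thesis .
qed

lemma pm_alt: "pois_mix x l g p = (\<Sum>i\<in>UNIV. p$i * ((l * g$i / p$i) ^ x / fact x * exp (- (l * g$i / p$i))))"
  unfolding pois_mix_def by (simp add: sum_distrib_left field_simps)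

lemma simplexD: "v \<in> open_simplex \<Longrightarrow> v$i > 0" "v \<in> open_simplex \<Longrightarrow> (\<Sum>i\<in>UNIV. v$i) = 1"
  by (auto simp: open_simplex_def)

lemma pm_nonneg: assumes "0 \<le> l" "g \<in> open_simplex" "p \<in> open_simplex"
  shows "0 \<le> pois_mix x l g p"
  unfolding pm_alt using assms simplexD[OF assms(2)] simplexD[OF assms(3)]
  by (intro sum_nonneg mult_nonneg_nonneg divide_nonneg_nonneg zero_le_power) (auto intro: less_imp_le)

lemma pm_pos: assumes "0 < l" "g \<in> open_simplex" "p \<in> open_simplex"
  shows "0 < pois_mix x l g p"
  unfolding pm_alt using assms simplexD[OF assms(2)] simplexD[OF assms(3)]
  by (intro sum_pos mult_pos_pos divide_pos_pos zero_less_power) auto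

lemma pm_le1: assumes "0 \<le> l" "g \<in> open_simplex" "p \<in> open_simplex"
  shows "pois_mix x l g p \<le> 1"
proof -
  have "pois_mix x l g p \<le> (\<Sum>i\<in>UNIV. p$i * 1)"
    unfolding pm_alt using assms simplexD[OF assms(2)] simplexD[OF assms(3)]
    by (intro sum_mono mult_left_mono poi_le1)
       (auto simp: less_imp_le)
  also have "\<dots> = 1" using simplexD[OF assms(3)] by simp
  finally show ?thesis .
qed

lemma prod_le_one_factor: fixes a :: "nat \<Rightarrow> real"
  assumes "j0 < n" "\<And>j. j < n \<Longrightarrow> 0 \<le> a j" "\<And>j. j < n \<Longrightarrow> a j \<le> 1"
  shows "(\<Prod>j<n. a j) \<le> a j0"
proof -
  have "(\<Prod>j<n. a j) = a j0 * (\<Prod>j\<in>{..<n}-{j0}. a j)"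
    using assms(1) by (subst prod.remove[of _ j0]) auto
  also have "\<dots> \<le> a j0 * 1"
    using assms by (intro mult_left_mono prod_le_1) auto
  finally show ?thesis by simp
qed
lemma gamma_int: assumes "0 < c"
  shows "ennreal c * (\<integral>\<^sup>+l. ennreal ((c*l)^k * exp (-(c*l))) * indicator {0..} (c*l) \<partial>lborel) = ennreal (fact k)"
proof -
  have "(\<integral>\<^sup>+u. ennreal (u^k * exp (-u)) * indicator {0..} u \<partial>lborel)
      = ennreal \<bar>c\<bar> * (\<integral>\<^sup>+l. ennreal ((0 + c*l)^k * exp (-(0 + c*l))) * indicator {0..} (0 + c*l) \<partial>lborel)"
    using assms by (intro nn_integral_real_affine) auto
  then show ?thesis using assms nn_intergal_power_times_exp_Ici[of k] by simp
qed

lemma inner_bound: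
  assumes x: "0 < x" and g: "g \<in> open_simplex" and p: "p \<in> open_simplex"
  shows "(\<integral>\<^sup>+l. indicator {0<..} l * ennreal (pois_mix x l g p / l) \<partial>lborel) \<le> 1"
proof -
  define c where "c i = g$i / p$i" for i
  define h where "h u = ennreal (u^(x-1) * exp (-u)) * indicator {0..} u" for u :: real
  have cpos: "0 < c i" for i using simplexD[OF g] simplexD[OF p] by (simp add: c_def)
  have ppos: "0 < p$i" for i using simplexD[OF p] by simp
  have hmeas[measurable]: "h \<in> borel_measurable borel" unfolding h_def by measurable
  have pw: "indicator {0<..} l * ennreal (pois_mix x l g p / l)
       \<le> (\<Sum>i\<in>UNIV. ennreal (p$i / fact x) * (ennreal (c i) * h (c i * l)))" for l
  proof (cases "0 < l")
    case False then show ?thesis by simp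
  next
    case True
    have eq: "pois_mix x l g p / l = (\<Sum>i\<in>UNIV. p$i / fact x * (c i * ((c i * l)^(x-1) * exp (-(c i * l)))))"
    proof -
      obtain m where m: "x = Suc m" using x by (cases x) auto
      have "p$i * ((l * g$i / p$i) ^ x / fact x * exp (- (l * g$i / p$i))) / l
          = p$i / fact x * (c i * ((c i * l)^(x-1) * exp (-(c i * l))))" for i
      proof -
        have e1: "l * g$i / p$i = c i * l" by (simp add: c_def)
        show ?thesis unfolding e1 m using True by (simp add: field_simps del: fact_Suc)
      qed
      then show ?thesis unfolding pm_alt sum_divide_distrib
        by (intro sum.cong refl) simp
    qed
    have "indicator {0<..} l * ennreal (pois_mix x l g p / l) = ennreal (pois_mix x l g p / l)"
      using True by simp
    also have "\<dots> = (\<Sum>i\<in>UNIV. ennreal (p$i / fact x * (c i * ((c i * l)^(x-1) * exp (-(c i * l))))))"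
      unfolding eq using True cpos ppos by (subst sum_ennreal) (auto intro!: mult_nonneg_nonneg less_imp_le)
    also have "\<dots> = (\<Sum>i\<in>UNIV. ennreal (p$i / fact x) * (ennreal (c i) * h (c i * l)))"
    proof (intro sum.cong refl)
      fix i
      have cl: "0 \<le> c i * l" using True cpos[of i] by simp
      have "ennreal (p$i / fact x * (c i * ((c i * l)^(x-1) * exp (-(c i * l)))))
          = ennreal (p$i / fact x) * (ennreal (c i) * ennreal ((c i * l)^(x-1) * exp (-(c i * l))))"
      proof -
        have a: "0 \<le> p$i / fact x" using ppos[of i] by simp
        have b: "0 \<le> c i" using cpos[of i] by simp
        show ?thesis by (simp only: ennreal_mult'[OF a] ennreal_mult'[OF b])
      qed
      then show "ennreal (p$i / fact x * (c i * ((c i * l)^(x-1) * exp (-(c i * l)))))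
          = ennreal (p$i / fact x) * (ennreal (c i) * h (c i * l))"
        using cl by (simp add: h_def)
    qed
    finally show ?thesis by simp
  qed
  have "(\<integral>\<^sup>+l. indicator {0<..} l * ennreal (pois_mix x l g p / l) \<partial>lborel)
     \<le> (\<integral>\<^sup>+l. (\<Sum>i\<in>UNIV. ennreal (p$i / fact x) * (ennreal (c i) * h (c i * l))) \<partial>lborel)"
    by (intro nn_integral_mono pw)
  also have "\<dots> = (\<Sum>i\<in>UNIV. ennreal (p$i / fact x) * (ennreal (c i) * (\<integral>\<^sup>+l. h (c i * l) \<partial>lborel)))"
    by (subst nn_integral_sum) (auto simp: nn_integral_cmult)
  also have "\<dots> = (\<Sum>i\<in>UNIV. ennreal (p$i / fact x) * ennreal (fact (x-1)))"
    using gamma_int[OF cpos] by (simp add: h_def)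
  also have "\<dots> = (\<Sum>i\<in>UNIV. ennreal (p$i * fact (x-1) / fact x))"
    using ppos by (intro sum.cong refl) (simp add: ennreal_mult' less_imp_le ennreal_of_nat_eq_real_of_nat flip: ennreal_mult)
  also have "\<dots> = ennreal ((\<Sum>i\<in>UNIV. p$i) * fact (x-1) / fact x)"
    using ppos by (subst sum_ennreal) (auto simp: sum_distrib_right sum_divide_distrib less_imp_le)
  also have "\<dots> \<le> 1"
    using simplexD(2)[OF p] by (simp add: fact_mono)
  finally show ?thesis .
qed
lemma g_meas[measurable]: "(\<lambda>z::(real^'k::finite) \<times> (real^'k). fst z $ i) \<in> borel_measurable borel"
  by (intro borel_measurable_continuous_onI continuous_intros)
lemma p_meas[measurable]: "(\<lambda>z::(real^'k::finite) \<times> (real^'k). snd z $ i) \<in> borel_measurable borel"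
  by (intro borel_measurable_continuous_onI continuous_intros)
lemma meas_pm[measurable]: "(\<lambda>z::real \<times> ((real^'k::finite) \<times> (real^'k)). pois_mix x (fst z) (fst (snd z)) (snd (snd z))) \<in> borel_measurable (lborel \<Otimes>\<^sub>M borel)"
  unfolding pois_mix_def by measurable

theorem theorem2:
  fixes \<pi>0 :: "((real^'k::finite) \<times> (real^'k)) measure"
    and xs :: "nat list"
  assumes "prob_space \<pi>0"
    and "sets \<pi>0 = sets borel"
    and "AE gp in \<pi>0. fst gp \<in> open_simplex \<and> snd gp \<in> open_simplex"
    and "\<exists>x\<in>set xs. x > 0"
  shows "0 < (\<integral>\<^sup>+ (l, gp). indicator {0<..} l *
                 ennreal ((\<Prod>j<length xs. pois_mix (xs ! j) l (fst gp) (snd gp)) / l)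
               \<partial>(lborel \<Otimes>\<^sub>M \<pi>0))
      \<and> (\<integral>\<^sup>+ (l, gp). indicator {0<..} l *
                 ennreal ((\<Prod>j<length xs. pois_mix (xs ! j) l (fst gp) (snd gp)) / l)
               \<partial>(lborel \<Otimes>\<^sub>M \<pi>0)) < \<infinity>"
proof -
  interpret P: prob_space \<pi>0 by fact
  interpret PS: pair_sigma_finite lborel \<pi>0
    by (simp add: pair_sigma_finite_def lborel.sigma_finite_measure_axioms P.sigma_finite_measure_axioms)
  define F where "F = (\<lambda>(l::real, gp::(real^'k) \<times> (real^'k)). indicator {0<..} l *
                 ennreal ((\<Prod>j<length xs. pois_mix (xs ! j) l (fst gp) (snd gp)) / l))"
  obtain j0 where j0: "j0 < length xs" "0 < xs ! j0"
    using assms(4) by (auto simp: in_set_conv_nth)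
  have Fmeas': "F \<in> borel_measurable (lborel \<Otimes>\<^sub>M borel)"
  proof -
    have "F = (\<lambda>z. indicator {0<..} (fst z) * ennreal ((\<Prod>j<length xs. pois_mix (xs ! j) (fst z) (fst (snd z)) (snd (snd z))) / fst z))"
      by (simp add: F_def case_prod_beta')
    also have "\<dots> \<in> borel_measurable (lborel \<Otimes>\<^sub>M borel)"
      by measurable
    finally show ?thesis .
  qed
  have Fmeas: "F \<in> borel_measurable (lborel \<Otimes>\<^sub>M \<pi>0)"
    using Fmeas' by (subst measurable_cong_sets[OF sets_pair_measure_cong[OF refl assms(2)] refl])
  have Fpos: "0 < F (l, gp)" if "0 < l" "fst gp \<in> open_simplex" "snd gp \<in> open_simplex" for l gp
  proof -
    have "0 < (\<Prod>j<length xs. pois_mix (xs ! j) l (fst gp) (snd gp)) / l"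
      using that by (intro divide_pos_pos prod_pos pm_pos) auto
    then show ?thesis using that by (simp add: F_def)
  qed
  have Fle: "(\<integral>\<^sup>+l. F (l, gp) \<partial>lborel) \<le> 1" if "fst gp \<in> open_simplex" "snd gp \<in> open_simplex" for gp
  proof -
    have "(\<integral>\<^sup>+l. F (l, gp) \<partial>lborel)
        \<le> (\<integral>\<^sup>+l. indicator {0<..} l * ennreal (pois_mix (xs!j0) l (fst gp) (snd gp) / l) \<partial>lborel)"
    proof (intro nn_integral_mono)
      fix l show "F (l, gp) \<le> indicator {0<..} l * ennreal (pois_mix (xs!j0) l (fst gp) (snd gp) / l)"
      proof (cases "0 < l")
        case True
        have "(\<Prod>j<length xs. pois_mix (xs ! j) l (fst gp) (snd gp)) \<le> pois_mix (xs!j0) l (fst gp) (snd gp)"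
          using j0 True that by (intro prod_le_one_factor pm_nonneg pm_le1) auto
        then have "(\<Prod>j<length xs. pois_mix (xs ! j) l (fst gp) (snd gp)) / l \<le> pois_mix (xs!j0) l (fst gp) (snd gp) / l"
          using True by (simp add: divide_right_mono)
        then show ?thesis using True by (simp add: F_def ennreal_leI)
      qed (simp add: F_def)
    qed
    also have "\<dots> \<le> 1" using inner_bound[OF j0(2) that] .
    finally show ?thesis .
  qed
  have eq: "integral\<^sup>N (lborel \<Otimes>\<^sub>M \<pi>0) F = (\<integral>\<^sup>+gp. (\<integral>\<^sup>+l. F (l, gp) \<partial>lborel) \<partial>\<pi>0)"
    using PS.nn_integral_snd[OF Fmeas] by simp
  have fin: "integral\<^sup>N (lborel \<Otimes>\<^sub>M \<pi>0) F < \<infinity>"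
  proof -
    have "(\<integral>\<^sup>+gp. (\<integral>\<^sup>+l. F (l, gp) \<partial>lborel) \<partial>\<pi>0) \<le> (\<integral>\<^sup>+gp. 1 \<partial>\<pi>0)"
    proof (rule nn_integral_mono_AE)
      show "AE gp in \<pi>0. (\<integral>\<^sup>+l. F (l, gp) \<partial>lborel) \<le> 1"
        using assms(3) by eventually_elim (simp add: Fle)
    qed
    also have "\<dots> = 1" by (simp add: P.emeasure_space_1)
    finally have "(\<integral>\<^sup>+gp. (\<integral>\<^sup>+l. F (l, gp) \<partial>lborel) \<partial>\<pi>0) \<le> 1" .
    then show ?thesis unfolding eq infinity_ennreal_def using ennreal_one_less_top
      by (rule le_less_trans)
  qed
  have pos: "integral\<^sup>N (lborel \<Otimes>\<^sub>M \<pi>0) F \<noteq> 0"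
  proof
    assume "integral\<^sup>N (lborel \<Otimes>\<^sub>M \<pi>0) F = 0"
    then have "AE z in lborel \<Otimes>\<^sub>M \<pi>0. F z = 0"
      using nn_integral_0_iff_AE[OF Fmeas] by simp
    then have ae: "AE l in lborel. AE gp in \<pi>0. F (l, gp) = 0"
      by (rule PS.AE_pair)
    have "AE l in lborel. l \<notin> {0<..1::real}"
    proof (rule AE_mp[OF ae], intro AE_I2 impI)
      fix l :: real assume a: "AE gp in \<pi>0. F (l, gp) = 0"
      show "l \<notin> {0<..1}"
      proof
        assume "l \<in> {0<..1}"
        then have l0: "0 < l" by simp
        have "AE gp in \<pi>0. False"
          using a assms(3) by eventually_elim (use Fpos[OF l0] in force)
        then show False by (simp add: P.AE_False)
      qed
    qed
    then have "{0<..1::real} \<in> null_sets lborel"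
      by (subst AE_iff_null_sets) auto
    then have "emeasure lborel {0<..1::real} = 0" by auto
    then show False by simp
  qed
  show ?thesis using fin pos unfolding F_def by (simp add: zero_less_iff_neq_zero)
qed
end
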